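(* Let $d\ge2$, $L\ge2$, $\sigma>0$, and $\lambda\in\,]0,\lambda^\star(\sigma,L)]$. Let $\mathcal{R}^<(\kappa_0,\kappa_1)=A(\kappa_0^4+\kappa_1^4)+B(\kappa_0^2+\kappa_1^2)+C\kappa_0^2\kappa_1^2+D$ on $[-1,1]^2$. Then every $(\kappa_0,\kappa_1)\in[-1,1]^2$ satisfying $$(1-\kappa_0^2)\,\partial_{\kappa_0}\mathcal{R}^<(\kappa_0,\kappa_1)=0,\qquad(1-\kappa_1^2)\,\partial_{\kappa_1}\mathcal{R}^<(\kappa_0,\kappa_1)=0$$ belongs to the set $\{(\pm1,\pm1),(0,\pm1),(\pm1,0),(0,0)\}$.
   Context: With $c_1(n)=1+n\sigma^2$, $c_2(n)=1+\sigma^2(d+n)$: $A=\frac{2\lambda^2}{L^2}c_2(8)+\frac{2\lambda^2(L-1)}{L^2}c_1(5)+\frac{\lambda^2(L-1)}{L^2}c_2(4)+\frac{\lambda^2(L-1)(L-2)}{2L^2}c_1(4)$, $B=-\frac{2\lambda}{L}c_2(4)+\frac{16\lambda^2\sigma^2}{L^2}c_2(6)+\frac{8\lambda^2\sigma^2(L-1)}{L^2}c_1(6)-\frac{\lambda(L-1)}{L}c_1(4)+\frac{4\lambda^2\sigma^2(L-1)}{L^2}c_2(3)+\frac{\lambda^2\sigma^2(L-1)(L-2)}{L^2}c_1(6)$, $C=\frac{4\lambda^2\sigma^2(L-1)}{L^2}$, $D$ a constant not affecting the derivatives. $c_3(\sigma,L)=16\sigma^2c_2(6)+8\sigma^2(L-1)c_1(6)+4\sigma^2(L-1)c_2(3)+\sigma^2(L-1)(L-2)c_1(6)+4c_2(8)+4(L-1)c_1(5)+2(L-1)c_2(4)+(L-1)(L-2)c_1(4)+4\sigma^2(L-1)$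 and $\lambda^\star(\sigma,L)=\frac{2Lc_2(4)+L(L-1)c_1(4)}{c_3(\sigma,L)}$. *)

theory Defs
  imports "HOL-Analysis.Analysis"
begin

definition c1 :: "real \<Rightarrow> real \<Rightarrow> real" where
  "c1 \<sigma> n = 1 + n * \<sigma>^2"

definition c2 :: "real \<Rightarrow> real \<Rightarrow> real \<Rightarrow> real" where
  "c2 \<sigma> d n = 1 + \<sigma>^2 * (d + n)"

definition coefA :: "real \<Rightarrow> real \<Rightarrow> real \<Rightarrow> real \<Rightarrow> real" where
  "coefA \<sigma> d L lam =
     2*lam^2/L^2 * c2 \<sigma> d 8 + 2*lam^2*(L-1)/L^2 * c1 \<sigma> 5
   + lam^2*(L-1)/L^2 * c2 \<sigma> d 4 + lam^2*(L-1)*(L-2)/(2*L^2) * c1 \<sigma> 4"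

definition coefB :: "real \<Rightarrow> real \<Rightarrow> real \<Rightarrow> real \<Rightarrow> real" where
  "coefB \<sigma> d L lam =
     - 2*lam/L * c2 \<sigma> d 4 + 16*lam^2*\<sigma>^2/L^2 * c2 \<sigma> d 6
   + 8*lam^2*\<sigma>^2*(L-1)/L^2 * c1 \<sigma> 6 - lam*(L-1)/L * c1 \<sigma> 4
   + 4*lam^2*\<sigma>^2*(L-1)/L^2 * c2 \<sigma> d 3
   + lam^2*\<sigma>^2*(L-1)*(L-2)/L^2 * c1 \<sigma> 6"

definition coefC :: "real \<Rightarrow> real \<Rightarrow> real \<Rightarrow> real" where
  "coefC \<sigma> L lam = 4*lam^2*\<sigma>^2*(L-1)/L^2"

definition c3 :: "real \<Rightarrow> real \<Rightarrow> real \<Rightarrow> real" where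
  "c3 \<sigma> d L =
     16*\<sigma>^2 * c2 \<sigma> d 6 + 8*\<sigma>^2*(L-1) * c1 \<sigma> 6 + 4*\<sigma>^2*(L-1) * c2 \<sigma> d 3
   + \<sigma>^2*(L-1)*(L-2) * c1 \<sigma> 6 + 4 * c2 \<sigma> d 8 + 4*(L-1) * c1 \<sigma> 5
   + 2*(L-1) * c2 \<sigma> d 4 + (L-1)*(L-2) * c1 \<sigma> 4 + 4*\<sigma>^2*(L-1)"

definition lambda_star :: "real \<Rightarrow> real \<Rightarrow> real \<Rightarrow> real" where
  "lambda_star \<sigma> d L = (2*L * c2 \<sigma> d 4 + L*(L-1) * c1 \<sigma> 4) / c3 \<sigma> d L"

definition Rlt :: "real \<Rightarrow> real \<Rightarrow> real \<Rightarrow> real \<Rightarrow> real \<Rightarrow> real \<Rightarrow> real \<Rightarrow> real" where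
  "Rlt \<sigma> d L lam D k0 k1 =
     coefA \<sigma> d L lam * (k0^4 + k1^4) + coefB \<sigma> d L lam * (k0^2 + k1^2)
   + coefC \<sigma> L lam * k0^2 * k1^2 + D"

end

theory Submission
  imports Defs
begin

lemma deriv_R0:
  "deriv (\<lambda>x. Rlt s d L lam D x k1) k0
     = 2*k0*(2*coefA s d L lam*k0^2 + coefB s d L lam + coefC s L lam*k1^2)"
proof -
  have "((\<lambda>x. Rlt s d L lam D x k1) has_real_derivative
        2*k0*(2*coefA s d L lam*k0^2 + coefB s d L lam + coefC s L lam*k1^2)) (at k0)"
    unfolding Rlt_def
    by (rule derivative_eq_intros refl | simp)+ (simp add: algebra_simps power2_eq_square power3_eq_cube)
  thus ?thesis by (rule DERIV_imp_deriv)
qed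

lemma deriv_R1:
  "deriv (\<lambda>y. Rlt s d L lam D k0 y) k1
     = 2*k1*(2*coefA s d L lam*k1^2 + coefB s d L lam + coefC s L lam*k0^2)"
proof -
  have "((\<lambda>y. Rlt s d L lam D k0 y) has_real_derivative
        2*k1*(2*coefA s d L lam*k1^2 + coefB s d L lam + coefC s L lam*k0^2)) (at k1)"
    unfolding Rlt_def
    by (rule derivative_eq_intros refl | simp)+ (simp add: algebra_simps power2_eq_square power3_eq_cube)
  thus ?thesis by (rule DERIV_imp_deriv)
qed

lemma sum_identity:
  assumes "L > 0"
  shows "2*coefA s d L lam + coefB s d L lam + coefC s L lam
    = lam / L^2 * (lam * c3 s d L - L * (2 * c2 s d 4 + (L-1) * c1 s 4))"
proof -
  have L2: "L^2 \<noteq> 0" using assms by simp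
  have "L^2 * (2*coefA s d L lam + coefB s d L lam + coefC s L lam)
     = lam * (lam * c3 s d L - L * (2 * c2 s d 4 + (L-1) * c1 s 4))"
    unfolding coefA_def coefB_def coefC_def c3_def
    using assms by (simp add: algebra_simps add_divide_distrib diff_divide_distrib power2_eq_square)
  thus ?thesis using L2 by (simp add: field_simps)
qed

lemma key:
  fixes d L :: nat and \<sigma> lam :: real
  assumes "d \<ge> 2" and "L \<ge> 2" and "\<sigma> > 0"
    and "0 < lam" and "lam \<le> lambda_star \<sigma> (real d) (real L)"
  shows "lam * c3 \<sigma> d L \<le> L * (2 * c2 \<sigma> d 4 + (real L-1) * c1 \<sigma> 4)"
    and "coefA \<sigma> d L lam > 0" and "coefC \<sigma> L lam \<ge> 0"
proof -
  have Lr: "real L \<ge> 2" using assms by simp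
  have dr: "real d \<ge> 2" using assms by simp
  have s2: "\<sigma>^2 > 0" using assms by simp
  have p1: "\<And>n. n \<ge> 0 \<Longrightarrow> c1 \<sigma> n > 0" unfolding c1_def using s2
    by (simp add: add_pos_nonneg)
  have p2: "\<And>n. n \<ge> 0 \<Longrightarrow> c2 \<sigma> d n > 0" unfolding c2_def using s2 dr
    by (simp add: add_pos_nonneg)
  have L1: "real L - 1 > 0" "real L - 2 \<ge> 0" using Lr by auto
  define a1 a2 a3 a4 a5 a6 a7 a8 where
    "a1 = c1 \<sigma> 6" "a2 = c1 \<sigma> 5" "a3 = c1 \<sigma> 4" "a4 = c2 \<sigma> d 6" "a5 = c2 \<sigma> d 3"
    "a6 = c2 \<sigma> d 8" "a7 = c2 \<sigma> d 4" "a8 = \<sigma>^2"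
  define l1 l2 where "l1 = real L - 1" "l2 = real L - 2"
  have pos: "a1 > 0" "a2 > 0" "a3 > 0" "a4 > 0" "a5 > 0" "a6 > 0" "a7 > 0" "a8 > 0" "l1 > 0" "l2 \<ge> 0"
    using p1[of 6] p1[of 5] p1[of 4] p2[of 6] p2[of 3] p2[of 8] p2[of 4] s2 L1
    unfolding a1_a2_a3_a4_a5_a6_a7_a8_def l1_l2_def by auto
  have e: "c3 \<sigma> d L = 16*a8*a4 + 8*a8*l1*a1 + 4*a8*l1*a5 + a8*l1*l2*a1 + 4*a6 + 4*l1*a2 + 2*l1*a7 + l1*l2*a3 + 4*a8*l1"
    unfolding c3_def a1_a2_a3_a4_a5_a6_a7_a8_def l1_l2_def by simp
  have c3p: "c3 \<sigma> d L > 0" unfolding e using pos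
    by (simp add: add_pos_nonneg add_nonneg_pos add_nonneg_nonneg)
  show "lam * c3 \<sigma> d L \<le> L * (2 * c2 \<sigma> d 4 + (real L-1) * c1 \<sigma> 4)"
    using assms(5) c3p unfolding lambda_star_def by (simp add: le_divide_eq mult.commute algebra_simps)
  have eA: "coefA \<sigma> d L lam = 2*lam^2/L^2 * a6 + 2*lam^2*l1/L^2 * a2 + lam^2*l1/L^2 * a7 + lam^2*l1*l2/(2*L^2) * a3"
    unfolding coefA_def a1_a2_a3_a4_a5_a6_a7_a8_def l1_l2_def by simp
  show "coefA \<sigma> d L lam > 0"
    unfolding eA using pos assms(4) Lr
    by (simp add: add_pos_nonneg add_nonneg_pos add_nonneg_nonneg)
  show "coefC \<sigma> L lam \<ge> 0" unfolding coefC_def using Lr by simp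
qed

lemma inner:
  assumes "2*A + B + C \<le> 0" "A > 0" "C \<ge> 0" "x \<in> {-1..1::real}" "y \<in> {-1..1::real}"
    "x \<noteq> 1" "x \<noteq> -1"
  shows "2*A*x^2 + B + C*y^2 < 0"
proof -
  have "\<bar>x\<bar> < 1" using assms(4,6,7) by auto
  hence "x^2 < 1" by (simp add: abs_square_less_1)
  moreover have "\<bar>y\<bar> \<le> 1" using assms(5) by auto
  hence "y^2 \<le> 1" by (simp add: abs_square_le_1)
  ultimately have "2*A*x^2 < 2*A" "C*y^2 \<le> C" using assms(2,3)
    by (simp_all add: mult_left_le)
  thus ?thesis using assms(1) by linarith
qed

theorem proposition12:
  fixes d L :: nat and \<sigma> lam D k0 k1 :: real
  assumes "d \<ge> 2" and "L \<ge> 2" and "\<sigma> > 0"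
    and "0 < lam" and "lam \<le> lambda_star \<sigma> (real d) (real L)"
    and "k0 \<in> {-1..1}" and "k1 \<in> {-1..1}"
    and "(1 - k0^2) * deriv (\<lambda>x. Rlt \<sigma> (real d) (real L) lam D x k1) k0 = 0"
    and "(1 - k1^2) * deriv (\<lambda>y. Rlt \<sigma> (real d) (real L) lam D k0 y) k1 = 0"
  shows "(k0, k1) \<in> {(1,1), (1,-1), (-1,1), (-1,-1), (0,1), (0,-1), (1,0), (-1,0), (0,0)}"
proof -
  note K0 = key[OF assms(1-5)]
  have "real L > 0" using assms(2) by simp
  have K1: "2*coefA \<sigma> d L lam + coefB \<sigma> d L lam + coefC \<sigma> L lam \<le> 0"
    unfolding sum_identity[OF \<open>real L > 0\<close>]
    using K0(1) assms(4)
    by (intro divide_nonpos_pos mult_nonneg_nonpos) auto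
  note K = K1 K0(2,3)
  have h0: "k0 = 0 \<or> k0 = 1 \<or> k0 = -1"
  proof (rule ccontr)
    assume n: "\<not> ?thesis"
    have "1 - k0^2 \<noteq> 0" using n by (auto simp: power2_eq_1_iff)
    moreover have "2*coefA \<sigma> d L lam*k0^2 + coefB \<sigma> d L lam + coefC \<sigma> L lam*k1^2 < 0"
      using inner[OF K assms(6,7)] n by auto
    ultimately show False using assms(8) n by (simp add: deriv_R0)
  qed
  have h1: "k1 = 0 \<or> k1 = 1 \<or> k1 = -1"
  proof (rule ccontr)
    assume n: "\<not> ?thesis"
    have "1 - k1^2 \<noteq> 0" using n by (auto simp: power2_eq_1_iff)
    moreover have "2*coefA \<sigma> d L lam*k1^2 + coefB \<sigma> d L lam + coefC \<sigma> L lam*k0^2 < 0"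
      using inner[OF K assms(7,6)] n by auto
    ultimately show False using assms(9) n by (simp add: deriv_R1)
  qed
  show ?thesis using h0 h1 by auto
qed

end
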